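(* Let $G=(V,E)$ be a graph with $m\ge 1$ edges. Every biased orientation of $G$ has in-degree distribution $p^\flat$ satisfying $H(p^\flat) \le \mathrm{OPT}(G) + 1$.
   Context: All graphs are finite, undirected and loopless, but multiple edges are allowed. For an orientation $\vec G$ of $G$, the in-degree distribution is $p_v := \rho_{\vec G}(v)/m$, where $\rho_{\vec G}(v)$ is the in-degree of $v$ and $m=|E|$. Entropy: $H(p) := \sum_{v\in V} -p_v\log p_v$, $\log$ base $2$, $-0\log 0:=0$. $\mathrm{OPT}(G)$ denotes the minimum of $H(p)$ over in-degree distributions $p$ of orientations of $G$. An orientation of $G$ is biased if each edge $vw$ with $\deg(v)>\deg(w)$ is oriented toward $v$ (edges between vertices of equal degree may be oriented arbitrarily). *)

theory Defs
  imports Complex_Main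
begin

text \<open>Multiple edges are allowed since
  distinct edge indices may have equal endpoints.\<close>

definition multigraph :: "'a set \<Rightarrow> 'e set \<Rightarrow> ('e \<Rightarrow> 'a) \<Rightarrow> ('e \<Rightarrow> 'a) \<Rightarrow> bool" where
  "multigraph V E s t \<longleftrightarrow> finite V \<and> finite E \<and>
     (\<forall>e\<in>E. s e \<in> V \<and> t e \<in> V \<and> s e \<noteq> t e)"

definition degree :: "'e set \<Rightarrow> ('e \<Rightarrow> 'a) \<Rightarrow> ('e \<Rightarrow> 'a) \<Rightarrow> 'a \<Rightarrow> nat" where
  "degree E s t v = card {e\<in>E. s e = v \<or> t e = v}"

text \<open>An orientation assigns to every edge its head (the endpoint it points to).\<close>
definition orientation :: "'e set \<Rightarrow> ('e \<Rightarrow> 'a) \<Rightarrow> ('e \<Rightarrow> 'a) \<Rightarrow> ('e \<Rightarrow> 'a) \<Rightarrow> bool" where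
  "orientation E s t h \<longleftrightarrow> (\<forall>e\<in>E. h e = s e \<or> h e = t e)"

definition indegree :: "'e set \<Rightarrow> ('e \<Rightarrow> 'a) \<Rightarrow> 'a \<Rightarrow> nat" where
  "indegree E h v = card {e\<in>E. h e = v}"

definition indeg_dist :: "'e set \<Rightarrow> ('e \<Rightarrow> 'a) \<Rightarrow> 'a \<Rightarrow> real" where
  "indeg_dist E h v = real (indegree E h v) / real (card E)"

definition entropy :: "'a set \<Rightarrow> ('a \<Rightarrow> real) \<Rightarrow> real" where
  "entropy V p = (\<Sum>v\<in>V. if p v = 0 then 0 else - p v * log 2 (p v))"

definition OPT :: "'a set \<Rightarrow> 'e set \<Rightarrow> ('e \<Rightarrow> 'a) \<Rightarrow> ('e \<Rightarrow> 'a) \<Rightarrow> real" where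
  "OPT V E s t = Min {entropy V (indeg_dist E h) | h. orientation E s t h}"

definition biased :: "'e set \<Rightarrow> ('e \<Rightarrow> 'a) \<Rightarrow> ('e \<Rightarrow> 'a) \<Rightarrow> ('e \<Rightarrow> 'a) \<Rightarrow> bool" where
  "biased E s t h \<longleftrightarrow> orientation E s t h \<and>
     (\<forall>e\<in>E. (degree E s t (s e) > degree E s t (t e) \<longrightarrow> h e = s e) \<and>
             (degree E s t (t e) > degree E s t (s e) \<longrightarrow> h e = t e))"

end

theory Submission
  imports Defs "HOL-Library.FuncSet"
begin

lemma fiber_sum:
  assumes "finite E" "finite V" "\<And>e. e\<in>E \<Longrightarrow> g e \<in> V"
  shows "(\<Sum>v\<in>V. real (indegree E g v) * f v) = (\<Sum>e\<in>E. f (g e))"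
proof -
  have "(\<Sum>e\<in>E. f (g e)) = (\<Sum>v\<in>V. \<Sum>e\<in>{e\<in>E. g e = v}. f (g e))"
    using sum.group[of E V g "\<lambda>e. f (g e)"] assms by (simp add: image_subset_iff)
  also have "\<dots> = (\<Sum>v\<in>V. \<Sum>e\<in>{e\<in>E. g e = v}. f v)"
    by (intro sum.cong refl) auto
  also have "\<dots> = (\<Sum>v\<in>V. real (indegree E g v) * f v)"
    by (simp add: indegree_def)
  finally show ?thesis by simp
qed

lemma log_le_lin: "(x::real) > 0 \<Longrightarrow> log 2 x \<le> (x - 1) / ln 2"
  unfolding log_def by (intro divide_right_mono ln_le_minus_one) auto

lemma entropy_vert:
  assumes "card E \<ge> 1"
  shows "entropy V (indeg_dist E g) =
    (\<Sum>v\<in>V. real (indegree E g v) * (- log 2 (real (indegree E g v) / real (card E)))) / real (card E)"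
proof -
  have m: "real (card E) > 0" using assms by simp
  have "entropy V (indeg_dist E g) =
    (\<Sum>v\<in>V. real (indegree E g v) * (- log 2 (real (indegree E g v) / real (card E))) / real (card E))"
    unfolding entropy_def indeg_dist_def using m by (intro sum.cong refl) auto
  then show ?thesis by (simp add: sum_divide_distrib)
qed

lemma entropy_edge:
  assumes "finite E" "finite V" "\<And>e. e\<in>E \<Longrightarrow> g e \<in> V" "card E \<ge> 1"
  shows "entropy V (indeg_dist E g) =
    (\<Sum>e\<in>E. - log 2 (real (indegree E g (g e)) / real (card E))) / real (card E)"
  unfolding entropy_vert[OF assms(4)]
  using fiber_sum[OF assms(1-3), where f="\<lambda>v. - log 2 (real (indegree E g v) / real (card E))"]
  by simp

theorem theorem2:
  fixes V :: "'a set" and E :: "'e set" and s t h :: "'e \<Rightarrow> 'a"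
  assumes "multigraph V E s t"
    and "card E \<ge> 1"
    and "biased E s t h"
  shows "entropy V (indeg_dist E h) \<le> OPT V E s t + 1"
proof -
  from assms(1) have fin: "finite V" "finite E"
    and inc: "\<And>e. e\<in>E \<Longrightarrow> s e \<in> V \<and> t e \<in> V \<and> s e \<noteq> t e"
    by (auto simp: multigraph_def)
  define m where "m = real (card E)"
  define d where "d = degree E s t"
  define M where "M e = real (max (d (s e)) (d (t e)))" for e
  define L where "L = (\<Sum>e\<in>E. - log 2 (M e / m)) / m"
  have m: "m > 0" using assms(2) by (simp add: m_def)
  have ho: "orientation E s t h" using assms(3) by (simp add: biased_def)
  have hV: "\<And>e. e\<in>E \<Longrightarrow> h e \<in> V" using ho inc by (force simp: orientation_def)
  have cd: "indegree E g v \<le> d v" if "orientation E s t g" for g v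
    unfolding indegree_def d_def degree_def
    using that fin by (intro card_mono) (auto simp: orientation_def)
  have Mpos: "M e > 0" if "e \<in> E" for e
  proof -
    have "card {e'\<in>E. s e' = s e \<or> t e' = s e} > 0" using that fin by (auto simp: card_gt_0_iff)
    then show ?thesis unfolding M_def d_def degree_def by simp
  qed
  have lower: "L \<le> entropy V (indeg_dist E g)" if o: "orientation E s t g" for g
  proof -
    have gV: "\<And>e. e\<in>E \<Longrightarrow> g e \<in> V" using o inc by (force simp: orientation_def)
    have "(\<Sum>e\<in>E. - log 2 (M e / m)) \<le> (\<Sum>e\<in>E. - log 2 (real (indegree E g (g e)) / m))"
    proof (rule sum_mono)
      fix e assume e: "e \<in> E"
      have c1: "indegree E g (g e) > 0" unfolding indegree_def using fin e
        by (auto simp: card_gt_0_iff)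
      have "indegree E g (g e) \<le> d (g e)" using cd[OF o] .
      moreover have "g e = s e \<or> g e = t e" using o e by (simp add: orientation_def)
      ultimately have "real (indegree E g (g e)) \<le> M e" unfolding M_def by auto
      then have "real (indegree E g (g e)) / m \<le> M e / m" using m by (simp add: divide_right_mono)
      then have "log 2 (real (indegree E g (g e)) / m) \<le> log 2 (M e / m)"
        using c1 m by (intro log_mono) auto
      then show "- log 2 (M e / m) \<le> - log 2 (real (indegree E g (g e)) / m)" by simp
    qed
    moreover have "entropy V (indeg_dist E g) = (\<Sum>e\<in>E. - log 2 (real (indegree E g (g e)) / m)) / m"
      using entropy_edge[OF fin(2,1) gV assms(2)] by (simp add: m_def)
    ultimately show ?thesis unfolding L_def
      using m by (simp add: divide_right_mono)
  qed
  define c where "c v = real (indegree E h v)" for v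
  have sumc: "(\<Sum>v\<in>V. c v) = m"
    using fiber_sum[OF fin(2,1) hV, where f="\<lambda>_. 1"] by (simp add: c_def m_def)
  have dsplit: "real (d v) = real (indegree E s v) + real (indegree E t v)" for v
  proof -
    have "{e\<in>E. s e = v \<or> t e = v} = {e\<in>E. s e = v} \<union> {e\<in>E. t e = v}" by auto
    moreover have "card ({e\<in>E. s e = v} \<union> {e\<in>E. t e = v}) = card {e\<in>E. s e = v} + card {e\<in>E. t e = v}"
      using fin inc by (intro card_Un_disjoint) force+
    ultimately show ?thesis by (simp add: d_def degree_def indegree_def)
  qed
  have sV: "\<And>e. e\<in>E \<Longrightarrow> s e \<in> V" and tV: "\<And>e. e\<in>E \<Longrightarrow> t e \<in> V" using inc by auto
  have sumd: "(\<Sum>v\<in>V. real (d v)) = 2 * m"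
    using fiber_sum[OF fin(2,1) sV, where f="\<lambda>_. 1"] fiber_sum[OF fin(2,1) tV, where f="\<lambda>_. 1"]
    by (simp add: dsplit sum.distrib m_def)
  have gibbs: "(\<Sum>v\<in>V. c v * (- log 2 (c v / m))) \<le> (\<Sum>v\<in>V. c v * (- log 2 (real (d v) / (2 * m))))"
  proof -
    have "(\<Sum>v\<in>V. c v * (log 2 (real (d v) / (2 * m)) - log 2 (c v / m)))
          \<le> (\<Sum>v\<in>V. (real (d v) / 2 - c v) / ln 2)"
    proof (rule sum_mono)
      fix v assume v: "v \<in> V"
      have cdv: "c v \<le> real (d v)" using cd[OF ho] by (simp add: c_def)
      show "c v * (log 2 (real (d v) / (2 * m)) - log 2 (c v / m)) \<le> (real (d v) / 2 - c v) / ln 2"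
      proof (cases "c v = 0")
        case True then show ?thesis using cdv by simp
      next
        case False
        then have cp: "c v > 0" by (simp add: c_def)
        with cdv have dp: "real (d v) > 0" by simp
        have "log 2 (real (d v) / (2 * m)) - log 2 (c v / m) = log 2 (real (d v) / (2 * c v))"
        proof -
          have "real (d v) / (2 * m) = (c v / m) * (real (d v) / (2 * c v))" using cp m by (simp add: field_simps)
          then have "log 2 (real (d v) / (2 * m)) = log 2 (c v / m) + log 2 (real (d v) / (2 * c v))"
            using cp dp m log_mult_pos[of "c v / m" "real (d v) / (2 * c v)" 2] by (simp add: mult.commute)
          then show ?thesis by simp
        qed
        also have "\<dots> \<le> (real (d v) / (2 * c v) - 1) / ln 2"
          using cp dp by (intro log_le_lin) simp
        finally have "c v * (log 2 (real (d v) / (2 * m)) - log 2 (c v / m))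
            \<le> c v * ((real (d v) / (2 * c v) - 1) / ln 2)"
          using cp by (intro mult_left_mono) auto
        also have "\<dots> = (real (d v) / 2 - c v) / ln 2" using cp by (simp add: field_simps)
        finally show ?thesis .
      qed
    qed
    also have "\<dots> = ((\<Sum>v\<in>V. real (d v)) / 2 - (\<Sum>v\<in>V. c v)) / ln 2"
      by (simp add: sum_divide_distrib[symmetric] sum_subtractf)
    also have "\<dots> = 0" using sumd sumc by simp
    finally have "(\<Sum>v\<in>V. c v * (log 2 (real (d v) / (2 * m)) - log 2 (c v / m))) \<le> 0" .
    then show ?thesis by (simp add: right_diff_distrib sum_subtractf sum_negf)
  qed
  have upper: "entropy V (indeg_dist E h) \<le> L + 1"
  proof -
    have "entropy V (indeg_dist E h) = (\<Sum>v\<in>V. c v * (- log 2 (c v / m))) / m"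
      unfolding entropy_vert[OF assms(2)] by (simp add: c_def m_def)
    also have "\<dots> \<le> (\<Sum>v\<in>V. c v * (- log 2 (real (d v) / (2 * m)))) / m"
      using gibbs m by (simp add: divide_right_mono)
    also have "(\<Sum>v\<in>V. c v * (- log 2 (real (d v) / (2 * m)))) = (\<Sum>e\<in>E. - log 2 (real (d (h e)) / (2 * m)))"
      unfolding c_def by (rule fiber_sum[OF fin(2,1) hV])
    also have "\<dots> = (\<Sum>e\<in>E. - log 2 (M e / m) + 1)"
    proof (intro sum.cong refl)
      fix e assume e: "e \<in> E"
      have "real (d (h e)) = M e"
        using assms(3) e unfolding biased_def orientation_def M_def d_def
        by (cases "degree E s t (s e) < degree E s t (t e)"; cases "degree E s t (t e) < degree E s t (s e)") auto
      moreover have "log 2 (M e / (2 * m)) = log 2 (M e / m) - 1"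
        using Mpos[OF e] m by (simp add: log_divide log_mult)
      ultimately show "- log 2 (real (d (h e)) / (2 * m)) = - log 2 (M e / m) + 1" by simp
    qed
    also have "(\<Sum>e\<in>E. - log 2 (M e / m) + 1) / m = L + 1"
    proof -
      have "(\<Sum>e\<in>E. - log 2 (M e / m) + 1) = (\<Sum>e\<in>E. - log 2 (M e / m)) + m"
        by (simp only: sum.distrib) (simp add: m_def)
      then show ?thesis unfolding L_def using m by (simp add: add_divide_distrib)
    qed
    finally show ?thesis .
  qed
  define S where "S = {entropy V (indeg_dist E g) | g. orientation E s t g}"
  have "S \<subseteq> (\<lambda>g. entropy V (indeg_dist E g)) ` (E \<rightarrow>\<^sub>E V)"
  proof
    fix x assume "x \<in> S"
    then obtain g where o: "orientation E s t g" and x: "x = entropy V (indeg_dist E g)"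
      unfolding S_def by auto
    have "indeg_dist E (restrict g E) = indeg_dist E g"
      by (auto simp: indeg_dist_def indegree_def restrict_def intro!: arg_cong[where f=card])
    moreover have "restrict g E \<in> E \<rightarrow>\<^sub>E V" using o inc by (force simp: orientation_def)
    ultimately show "x \<in> (\<lambda>g. entropy V (indeg_dist E g)) ` (E \<rightarrow>\<^sub>E V)" using x
      by (metis image_eqI)
  qed
  then have finS: "finite S" using fin by (meson finite_PiE finite_imageI finite_subset)
  have "orientation E s t s" by (simp add: orientation_def)
  then have "S \<noteq> {}" unfolding S_def by auto
  then have "Min S \<in> S" using finS by simp
  then obtain g where o: "orientation E s t g" and "OPT V E s t = entropy V (indeg_dist E g)"
    unfolding OPT_def S_def[symmetric] by (auto simp: S_def)
  then show ?thesis using lower[OF o] upper by simp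
qed

end
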